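(* Let $U=[n,u,E,B]$, with $n(t,x)\in\mathbb{R}$ and $u,E,B(t,x)\in\mathbb{R}^3$, satisfy for all $t\geq0$, $x\in\mathbb{R}^3$ the linear system \begin{equation*} \partial_t n +\gamma \nabla\cdot u =0,\quad \partial_t u+\gamma \nabla n +\beta {E}-\mu\Delta u=0,\quad \partial_t {E} - \nabla \times {B} -\beta u = 0,\quad \partial_t {B} + \nabla \times {E} = 0,\quad \nabla \cdot{E} = -\frac{\beta}{\gamma}n, \ \ \nabla\cdot {B} =0. \end{equation*} Then there is a time-frequency functional $\mathcal{E}(\hat U(t,k))$ (a real-valued function of $k$ and of the value $\hat U(t,k)\in\mathbb{C}^{10}$) and a constant $c>0$ such that \begin{equation*} \mathcal{E}(\hat{U}(t,k))\sim |\hat{U}(t,k)|^2:=|\hat{n}(t,k)|^2+|\hat{u}(t,k)|^2+|\hat{E}(t,k)|^2+|\hat{B}(t,k)|^2 \end{equation*} and \begin{equation*} \partial_t \mathcal{E}(\hat{U}(t,k))+c|\hat{n}(t,k)|^2+c|k|^2 |\hat{u}(t,k)|^2 +c\frac{|k|^2}{(1+|k|^2)^2}|\hat{E}(t,k)|^2+c\frac{|k|^4}{(1+|k|^2)^3}|\hat{B}(t,k)|^2 \leq 0 \end{equation*} for all $t\geq 0$, $k\in \mathbb{R}^3$. In particular, \begin{equation*} \partial_t \mathcal{E}(\hat{U}(t,k))+c \frac{|k|^4}{(1+|k|^2)^3} \mathcal{E}(\hat{U}(t,k))\leq 0 \end{equation*} for all $t\geq 0$, $k\in \mathbb{R}^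3$.
   Context: $\gamma,\beta,\mu>0$ are constants. $\hat f(t,k)=\int_{\mathbb{R}^3}e^{-ik\cdot x}f(t,x)\,dx$ is the Fourier transform in $x$. $A\sim B$ means $cB\le A\le CB$ for constants $0<c\le C$ independent of $t,k$. *)

theory Defs
  imports "HOL-Analysis.Analysis"
begin

text \<open>Fourier-side symbols.  With the convention
  hat f(k) = integral of e^(-i k.x) f(x) dx, the operators act as
  grad -> i k, div -> i k., curl -> i k x, Laplacian -> -|k|^2.\<close>

definition kdot :: "real^3 \<Rightarrow> complex^3 \<Rightarrow> complex" where
  "kdot k v = (\<Sum>i\<in>UNIV. complex_of_real (k$i) * v$i)"

definition kcross :: "real^3 \<Rightarrow> complex^3 \<Rightarrow> complex^3" where
  "kcross k v = (\<chi> i.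
     if i = 1 then complex_of_real (k$2) * v$3 - complex_of_real (k$3) * v$2
     else if i = 2 then complex_of_real (k$3) * v$1 - complex_of_real (k$1) * v$3
     else complex_of_real (k$1) * v$2 - complex_of_real (k$2) * v$1)"

definition kscale :: "real^3 \<Rightarrow> complex \<Rightarrow> complex^3" where
  "kscale k z = (\<chi> i. complex_of_real (k$i) * z)"

definition fourier_system ::
  "real \<Rightarrow> real \<Rightarrow> real \<Rightarrow> (real \<Rightarrow> real^3 \<Rightarrow> complex) \<Rightarrow> (real \<Rightarrow> real^3 \<Rightarrow> complex^3)
   \<Rightarrow> (real \<Rightarrow> real^3 \<Rightarrow> complex^3) \<Rightarrow> (real \<Rightarrow> real^3 \<Rightarrow> complex^3) \<Rightarrow> bool" where
  "fourier_system \<gamma> \<beta> \<mu> nh uh Eh Bh \<longleftrightarrow>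
    (\<forall>t\<ge>0. \<forall>k.
      ((\<lambda>s. nh s k) has_vector_derivative
          (- \<i> * complex_of_real \<gamma> * kdot k (uh t k))) (at t within {0..}) \<and>
      ((\<lambda>s. uh s k) has_vector_derivative
          (- ((\<i> * complex_of_real \<gamma>) *s kscale k (nh t k))
           - complex_of_real \<beta> *s Eh t k
           - complex_of_real (\<mu> * (norm k)\<^sup>2) *s uh t k)) (at t within {0..}) \<and>
      ((\<lambda>s. Eh s k) has_vector_derivative
          (\<i> *s kcross k (Bh t k) + complex_of_real \<beta> *s uh t k)) (at t within {0..}) \<and>
      ((\<lambda>s. Bh s k) has_vector_derivative
          (- (\<i> *s kcross k (Eh t k)))) (at t within {0..}) \<and>
      \<i> * kdot k (Eh t k) = - complex_of_real (\<beta> / \<gamma>) * nh t k \<and>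
      kdot k (Bh t k) = 0)"

end

theory Submission
  imports Defs "HOL-Analysis.Analysis"
begin


lemma young:
  fixes X A B e :: real
  assumes "X^2 \<le> A*B" "A \<ge> 0" "B \<ge> 0" "e > 0"
  shows "\<bar>X\<bar> \<le> e*A + B/(4*e)"
proof -
  have "0 \<le> (e*A - B/(4*e))^2" by simp
  hence "A*B \<le> (e*A + B/(4*e))^2" using assms(4)
    by (simp add: power2_eq_square field_simps)
  hence "\<bar>X\<bar>^2 \<le> (e*A + B/(4*e))^2" using assms(1) by simp
  moreover have "0 \<le> e*A + B/(4*e)" using assms by simp
  ultimately show ?thesis using power2_le_imp_le by blast
qed

lemma lincomb:
  fixes M A1 A2 A3 A4 A5 A6 A7 A8 A9 A10 A11 A12 A13 F G Nc B1 B2 :: real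
  assumes "A1 \<le> B1" "B1 \<le> (1/5)*M" "Nc \<le> A2" "-A3 \<le> A4" "A4 \<le> (1/4)*Nc + (1/5)*M" "0 \<le> A5"
    "A6 \<le> B2" "B2 \<le> (1/5)*M" "-A12 \<le> A7" "A12 \<le> (1/4)*F + (1/5)*M" "A8 - A9 \<le> A13"
    "A13 \<le> (1/4)*G + (1/5)*M" "A11 \<le> (1/4)*F" "0 \<le> A10"
  shows "-2*M + (A1 - A2 - A3) + (-F - A5 + A6 - A7 + A8) - (G + A9 + A10 - A11)
     \<le> -(3/4)*Nc - M - (1/2)*F - (3/4)*G"
  using assms by linarith

lemma core:
 fixes N U E B K P R X1 X2 Y a g b q mu k1 k2 k3 m :: real
 assumes nn: "N\<ge>0" "U\<ge>0" "E\<ge>0" "B\<ge>0" "K\<ge>0" and a: "a>0" "a*(1+K)=1"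
  and P: "0\<le>P" "P\<le>K*U" and R: "0\<le>R"
  and X1: "X1^2 \<le> K*N*U" and X2: "X2^2 \<le> U*E" and Y: "Y^2 \<le> K*U*B"
  and pos: "g>0" "b>0" "mu>0" "m>0" and mq: "m\<le>g" "m\<le>q"
  and kp: "k1>0" "k2>0" "k3>0"
  and c3: "k3 \<le> b*k2/4" and c1: "k1*g \<le> mu/5" "k1*mu^2 \<le> m*mu/5"
  and c2: "b*k2 \<le> mu/5" "k2*mu^2 \<le> b*mu/5" and c4: "(k2+k3*b)^2 \<le> k3*mu/5"
 shows "-2*mu*K*U + k1*a*(g*P - g*K*N - q*N - mu*K*X1) + k2*K*a^2*(-b*E - b*N + b*U - mu*K*X2 + Y)
           - k3*K*a^3*(K*B + b*Y + R - K*E)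
    \<le> -(3/4)*(k1*m*N) - (mu*(K*U)) - (1/2)*(b*k2*(K*a^2*E)) - (3/4)*(k3*(K^2*a^3*B))"
proof -
  have Ka: "K*a \<le> 1" using a nn by (simp add: algebra_simps)
  have a1: "a \<le> 1" using a nn by (metis add_increasing2 less_eq_real_def mult.commute mult_le_cancel_left1 nle_le)
  have sq1: "(a*K)^2 \<le> 1" "(K*a)^2 \<le> 1" using Ka a nn by (auto intro!: power_le_one simp: mult.commute)
  have KU: "0 \<le> K*U" using nn by simp
  have BW: "0 \<le> K^2*a^3*B" using nn a by simp
  have EW: "0 \<le> K*a^2*E" using nn a by simp
  have fa: "k1*a*(g*P) \<le> k1*g*(K*U)"
  proof -
    have "a*P \<le> P" using a1 P(1) a by (simp add: mult_left_le_one_le)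
    hence "a*P \<le> K*U" using P by linarith
    thus ?thesis using kp pos by (simp add: mult_left_mono algebra_simps)
  qed
  have fa2: "k1*g*(K*U) \<le> (1/5)*(mu*(K*U))" using mult_right_mono[OF c1(1) KU] by simp
  have fa3: "b*k2*(K*U) \<le> (1/5)*(mu*(K*U))" using mult_right_mono[OF c2(1) KU] by simp
  have fb: "k1*m*N \<le> k1*a*(g*K*N + q*N)"
  proof -
    have "K*m \<le> K*g" using mq nn by (simp add: mult_left_mono)
    hence "m*(1+K) \<le> g*K + q" using mq by (simp add: algebra_simps)
    hence "m \<le> a*(g*K+q)" using a by (metis mult.commute mult.left_commute mult_left_mono less_eq_real_def mult_1 )
    hence "m*N \<le> a*(g*K+q)*N" using nn by (simp add: mult_right_mono)
    hence "k1*(m*N) \<le> k1*(a*(g*K+q)*N)" using kp by (simp add: mult_left_mono)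
    thus ?thesis by (simp add: algebra_simps)
  qed
  have fc: "k1*\<bar>a*mu*K*X1\<bar> \<le> (1/4)*(k1*m*N) + (1/5)*(mu*(K*U))"
  proof -
    have "(a*mu*K*X1)^2 = (a*K)^2*mu^2*X1^2" by (simp add: power_mult_distrib)
    also have "\<dots> \<le> (a*K)^2*mu^2*(K*N*U)" using X1 by (simp add: mult_left_mono)
    also have "\<dots> \<le> 1*mu^2*(K*N*U)"
      using sq1 a nn by (intro mult_right_mono) auto
    finally have "(a*mu*K*X1)^2 \<le> N*(mu^2*K*U)" by (simp add: algebra_simps)
    from young[OF this nn(1) _ , of "m/4"] have "\<bar>a*mu*K*X1\<bar> \<le> m/4*N + mu^2*K*U/m"
      using pos nn by simp
    hence "k1*\<bar>a*mu*K*X1\<bar> \<le> k1*(m/4*N + mu^2*K*U/m)" using kp by (simp add: mult_left_mono)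
    also have "\<dots> = (1/4)*(k1*m*N) + k1*mu^2/m*(K*U)" by (simp add: algebra_simps)
    finally have "k1*\<bar>a*mu*K*X1\<bar> \<le> (1/4)*(k1*m*N) + k1*mu^2/m*(K*U)" .
    moreover have "k1*mu^2/m*(K*U) \<le> (mu/5)*(K*U)"
      using c1 pos KU by (intro mult_right_mono) (simp_all add: field_simps)
    ultimately show ?thesis by simp
  qed
  have fd: "k2*K*a^2*(b*U) \<le> b*k2*(K*U)"
  proof -
    have "a^2 \<le> 1" using a1 a by (simp add: power_le_one)
    hence "a^2*(K*U) \<le> 1*(K*U)" using KU by (intro mult_right_mono) auto
    hence "(k2*b)*(a^2*(K*U)) \<le> (k2*b)*(K*U)" using kp pos by (intro mult_left_mono) auto
    thus ?thesis by (simp add: algebra_simps)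
  qed
  have fd2: "0 \<le> k2*K*a^2*(b*N)" using kp pos nn a by simp
  have fe: "k2*\<bar>mu*K^2*a^2*X2\<bar> \<le> (1/4)*(b*k2*(K*a^2*E)) + (1/5)*(mu*(K*U))"
  proof -
    have "(mu*K^2*a^2*X2)^2 = mu^2*K^4*a^4*X2^2" by algebra
    also have "\<dots> \<le> mu^2*K^4*a^4*(U*E)" using X2 by (simp add: mult_left_mono)
    also have "\<dots> = (K*a^2*E)*((K*a)^2*(mu^2*K*U))" by (simp add: power2_eq_square power4_eq_xxxx power3_eq_cube algebra_simps)
    also have "\<dots> \<le> (K*a^2*E)*(1*(mu^2*K*U))"
      using sq1 a nn EW by (intro mult_left_mono mult_right_mono) auto
    finally have "(mu*K^2*a^2*X2)^2 \<le> (K*a^2*E)*(mu^2*K*U)" by simp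
    from young[OF this EW _ , of "b/4"] have "\<bar>mu*K^2*a^2*X2\<bar> \<le> b/4*(K*a^2*E) + mu^2*K*U/b"
      using pos nn by simp
    hence "k2*\<bar>mu*K^2*a^2*X2\<bar> \<le> k2*(b/4*(K*a^2*E) + mu^2*K*U/b)" using kp by (simp add: mult_left_mono)
    also have "\<dots> = (1/4)*(b*k2*(K*a^2*E)) + k2*mu^2/b*(K*U)" by (simp add: algebra_simps)
    finally have "k2*\<bar>mu*K^2*a^2*X2\<bar> \<le> (1/4)*(b*k2*(K*a^2*E)) + k2*mu^2/b*(K*U)" .
    moreover have "k2*mu^2/b*(K*U) \<le> (mu/5)*(K*U)"
      using c2 pos KU by (intro mult_right_mono) (simp_all add: field_simps)
    ultimately show ?thesis by simp
  qed
  define qq where "qq = k2 + k3*b"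
  have sp: "qq > 0" using kp pos by (simp add: qq_def add_pos_pos)
  have ff: "\<bar>k2*K*a^2*Y\<bar> + \<bar>k3*K*a^3*(b*Y)\<bar> \<le> (1/4)*(k3*(K^2*a^3*B)) + (1/5)*(mu*(K*U))"
  proof -
    have "\<bar>k3*K*a^3*(b*Y)\<bar> = k3*b*a*\<bar>K*a^2*Y\<bar>" using kp pos a nn
      by (simp add: abs_mult power3_eq_cube power2_eq_square algebra_simps)
    also have "\<dots> \<le> k3*b*\<bar>K*a^2*Y\<bar>"
    proof -
      have "a*\<bar>K*a^2*Y\<bar> \<le> 1*\<bar>K*a^2*Y\<bar>" using a1 by (intro mult_right_mono) auto
      hence "(k3*b)*(a*\<bar>K*a^2*Y\<bar>) \<le> (k3*b)*\<bar>K*a^2*Y\<bar>" using kp pos by (intro mult_left_mono) auto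
      thus ?thesis by (simp add: algebra_simps)
    qed
    finally have 1: "\<bar>k2*K*a^2*Y\<bar> + \<bar>k3*K*a^3*(b*Y)\<bar> \<le> qq*\<bar>K*a^2*Y\<bar>"
      using kp by (simp add: qq_def abs_mult algebra_simps)
    have "(K*a^2*Y)^2 = K^2*a^4*Y^2" by algebra
    also have "\<dots> \<le> K^2*a^4*(K*U*B)" using Y by (simp add: mult_left_mono)
    also have "\<dots> = (K^2*a^3*B)*(a*(K*U))" by (simp add: power2_eq_square power4_eq_xxxx power3_eq_cube algebra_simps)
    also have "\<dots> \<le> (K^2*a^3*B)*(1*(K*U))"
      using a1 a nn BW KU by (intro mult_left_mono mult_right_mono) auto
    finally have "(K*a^2*Y)^2 \<le> (K^2*a^3*B)*(K*U)" by simp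
    from young[OF this BW KU, of "k3/(4*qq)"] have "\<bar>K*a^2*Y\<bar> \<le> k3/(4*qq)*(K^2*a^3*B) + (K*U)/(4*(k3/(4*qq)))"
      using kp sp by simp
    hence "qq*\<bar>K*a^2*Y\<bar> \<le> qq*(k3/(4*qq)*(K^2*a^3*B) + (K*U)/(4*(k3/(4*qq))))" using sp by (simp add: mult_left_mono)
    also have "\<dots> = (1/4)*(k3*(K^2*a^3*B)) + qq^2/k3*(K*U)" using sp kp by (simp add: field_simps power2_eq_square)
    finally have "qq*\<bar>K*a^2*Y\<bar> \<le> (1/4)*(k3*(K^2*a^3*B)) + qq^2/k3*(K*U)" .
    moreover have "qq^2/k3*(K*U) \<le> (mu/5)*(K*U)"
      using c4 kp KU by (intro mult_right_mono) (simp_all add: field_simps qq_def)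
    ultimately show ?thesis using 1 by simp
  qed
  have fg: "k3*K*a^3*(K*E) \<le> (1/4)*(b*k2*(K*a^2*E))"
  proof -
    have "k3*K*a^3*(K*E) = k3*(K*a)*(K*a^2*E)" by (simp add: power2_eq_square power3_eq_cube algebra_simps)
    also have "\<dots> \<le> k3*1*(K*a^2*E)" using Ka kp EW by (intro mult_right_mono mult_left_mono) auto
    also have "\<dots> \<le> (b*k2/4)*(K*a^2*E)" using mult_right_mono[OF c3 EW] by simp
    finally show ?thesis by simp
  qed
  have fh: "0 \<le> k3*K*a^3*R" using kp nn a R by simp
  have fB: "k3*K*a^3*(K*B) = k3*(K^2*a^3*B)" by (simp add: power2_eq_square algebra_simps)
  have e1: "-(k1*a*(mu*K*X1)) \<le> k1*\<bar>a*mu*K*X1\<bar>"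
  proof -
    have "k1*(-(a*mu*K*X1)) \<le> k1*\<bar>a*mu*K*X1\<bar>" using kp by (intro mult_left_mono) auto
    thus ?thesis by (simp add: algebra_simps)
  qed
  have e2: "k2*K*a^2*(mu*K*X2) \<ge> - (k2*\<bar>mu*K^2*a^2*X2\<bar>)"
  proof -
    have "k2*(-(mu*K^2*a^2*X2)) \<le> k2*\<bar>mu*K^2*a^2*X2\<bar>" using kp by (intro mult_left_mono) auto
    thus ?thesis by (simp add: algebra_simps power2_eq_square)
  qed
  have e3: "k2*K*a^2*Y - k3*K*a^3*(b*Y) \<le> \<bar>k2*K*a^2*Y\<bar> + \<bar>k3*K*a^3*(b*Y)\<bar>" by linarith
  have fc2: "k1*a*(g*P - g*K*N - q*N - mu*K*X1) = k1*a*(g*P) - k1*a*(g*K*N + q*N) - k1*a*(mu*K*X1)"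
    by (simp add: algebra_simps)
  have fd3: "k2*K*a^2*(-b*E - b*N + b*U - mu*K*X2 + Y) = -(b*k2*(K*a^2*E)) - k2*K*a^2*(b*N) + k2*K*a^2*(b*U) - k2*K*a^2*(mu*K*X2) + k2*K*a^2*Y"
    by (simp add: algebra_simps power2_eq_square)
  have fg3: "k3*K*a^3*(K*B + b*Y + R - K*E) = k3*(K^2*a^3*B) + k3*K*a^3*(b*Y) + k3*K*a^3*R - k3*K*a^3*(K*E)"
    by (simp add: algebra_simps power2_eq_square)
  have m2: "-2*mu*K*U = -2*(mu*(K*U))" by simp
  show ?thesis unfolding fc2 fd3 fg3 m2
    by (rule lincomb[OF fa fa2 fb e1 fc fd2 fd fa3 e2 fe e3 ff fg fh])
qed


lemma lc2:
  fixes p1 p2 p3 q1 q2 q3 N U E B :: real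
  shows "p1 \<le> (1/2)*q1 \<Longrightarrow> p2 \<le> (1/2)*q2 \<Longrightarrow> p3 \<le> (1/2)*q3 \<Longrightarrow> q1 \<le> (1/2)*N + (1/2)*U
   \<Longrightarrow> q2 \<le> (1/2)*U + (1/2)*E \<Longrightarrow> q3 \<le> (1/2)*E + (1/2)*B \<Longrightarrow> N \<ge> 0 \<Longrightarrow> B \<ge> 0
   \<Longrightarrow> p1+p2+p3 \<le> (1/2)*(N+U+E+B)" by argo

lemma lc3:
  fixes x1 x2 x3 S :: real
  assumes "\<bar>x1\<bar> + \<bar>x2\<bar> + \<bar>x3\<bar> \<le> (1/2)*S" "S \<ge> 0"
  shows "(1/2)*S \<le> S + x1 + x2 - x3" "S + x1 + x2 - x3 \<le> 2*S"
  using assms by argo+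

lemma equiv_core:
  fixes N U E B K a X1 X2 X3 k1 k2 k3 :: real
  assumes nn: "N\<ge>0" "U\<ge>0" "E\<ge>0" "B\<ge>0" "K\<ge>0" and a: "a>0" "a*(1+K)=1"
  and X1: "X1^2 \<le> K*N*U" and X2: "X2^2 \<le> U*E" and X3: "X3^2 \<le> K*E*B"
  and kp: "0<k1" "k1\<le>1/2" "0<k2" "k2\<le>1/2" "0<k3" "k3\<le>1/2"
  shows "(1/2)*(N+U+E+B) \<le> N+U+E+B + k1*a*X1 + k2*K*a^2*X2 - k3*K*a^3*X3"
    and "N+U+E+B + k1*a*X1 + k2*K*a^2*X2 - k3*K*a^3*X3 \<le> 2*(N+U+E+B)"
proof -
  have Ka: "K*a \<le> 1" using a nn by (simp add: algebra_simps)
  have a1: "a \<le> 1" using a nn by (metis add_increasing2 less_eq_real_def mult.commute mult_le_cancel_left1 nle_le)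
  have Ka0: "0 \<le> K*a" using a nn by simp
  have w1: "a*(K*a) \<le> 1" using a1 Ka Ka0 a by (metis mult_le_one less_eq_real_def)
  have w2: "K*a^2 \<le> 1" using w1 by (simp add: power2_eq_square algebra_simps)
  have w2': "0 \<le> K*a^2" using nn a by simp
  have w3: "(K*a)^2*a^2*K \<le> 1"
  proof -
    have "(K*a)^2 \<le> 1" using Ka Ka0 by (simp add: power_le_one)
    moreover have "a^2*K \<le> 1" using w2 by (simp add: mult.commute)
    ultimately show ?thesis using Ka0 nn a by (metis mult_le_one mult.assoc zero_le_power2 zero_le_mult_iff)
  qed
  have y1: "\<bar>a*X1\<bar> \<le> (1/2)*N + (1/2)*U"
  proof -
    have "(a*X1)^2 = a^2*X1^2" by (simp add: power_mult_distrib)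
    also have "\<dots> \<le> a^2*(K*N*U)" using X1 by (simp add: mult_left_mono)
    also have "\<dots> = (K*a^2)*(N*U)" by (simp add: algebra_simps)
    also have "\<dots> \<le> 1*(N*U)" using w2 nn by (intro mult_right_mono) auto
    finally have "(a*X1)^2 \<le> N*U" by simp
    from young[OF this nn(1) nn(2), of "1/2"] show ?thesis by simp
  qed
  have y2: "\<bar>K*a^2*X2\<bar> \<le> (1/2)*U + (1/2)*E"
  proof -
    have "(K*a^2*X2)^2 = (K*a^2)^2*X2^2" by (simp add: power_mult_distrib)
    also have "\<dots> \<le> (K*a^2)^2*(U*E)" using X2 by (simp add: mult_left_mono)
    also have "\<dots> \<le> 1*(U*E)" using w2 w2' nn by (intro mult_right_mono) (auto simp: power_le_one)
    finally have "(K*a^2*X2)^2 \<le> U*E" by simp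
    from young[OF this nn(2) nn(3), of "1/2"] show ?thesis by simp
  qed
  have y3: "\<bar>K*a^3*X3\<bar> \<le> (1/2)*E + (1/2)*B"
  proof -
    have "(K*a^3*X3)^2 = (K*a^3)^2*X3^2" by (simp add: power_mult_distrib)
    also have "\<dots> \<le> (K*a^3)^2*(K*E*B)" using X3 by (simp add: mult_left_mono)
    also have "\<dots> = ((K*a)^2*a^2*K)*(a^2*(E*B))" by (simp add: power2_eq_square power3_eq_cube algebra_simps)
    also have "\<dots> \<le> 1*(a^2*(E*B))" using w3 nn by (intro mult_right_mono) auto
    also have "\<dots> \<le> 1*(E*B)" using a1 a nn by (simp add: mult_left_le_one_le power_le_one)
    finally have "(K*a^3*X3)^2 \<le> E*B" by simp
    from young[OF this nn(3) nn(4), of "1/2"] show ?thesis by simp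
  qed
  have z1: "\<bar>k1*a*X1\<bar> \<le> (1/2)*(\<bar>a*X1\<bar>)"
  proof -
    have "\<bar>k1*a*X1\<bar> = k1*\<bar>a*X1\<bar>" using kp by (simp add: abs_mult)
    also have "\<dots> \<le> (1/2)*\<bar>a*X1\<bar>" by (rule mult_right_mono) (use kp in auto)
    finally show ?thesis by simp
  qed
  have z2: "\<bar>k2*K*a^2*X2\<bar> \<le> (1/2)*(\<bar>K*a^2*X2\<bar>)"
  proof -
    have "\<bar>k2*K*a^2*X2\<bar> = k2*\<bar>K*a^2*X2\<bar>" using kp by (simp add: abs_mult)
    also have "\<dots> \<le> (1/2)*\<bar>K*a^2*X2\<bar>" by (rule mult_right_mono) (use kp in auto)
    finally show ?thesis by simp
  qed
  have z3: "\<bar>k3*K*a^3*X3\<bar> \<le> (1/2)*(\<bar>K*a^3*X3\<bar>)"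
  proof -
    have "\<bar>k3*K*a^3*X3\<bar> = k3*\<bar>K*a^3*X3\<bar>" using kp by (simp add: abs_mult)
    also have "\<dots> \<le> (1/2)*\<bar>K*a^3*X3\<bar>" by (rule mult_right_mono) (use kp in auto)
    finally show ?thesis by simp
  qed
  have sm: "\<bar>k1*a*X1\<bar> + \<bar>k2*K*a^2*X2\<bar> + \<bar>k3*K*a^3*X3\<bar> \<le> (1/2)*(N+U+E+B)"
    by (rule lc2[OF z1 z2 z3 y1 y2 y3 nn(1) nn(4)])
  have S0: "N+U+E+B \<ge> 0" using nn by simp
  show "(1/2)*(N+U+E+B) \<le> N+U+E+B + k1*a*X1 + k2*K*a^2*X2 - k3*K*a^3*X3"
    and "N+U+E+B + k1*a*X1 + k2*K*a^2*X2 - k3*K*a^3*X3 \<le> 2*(N+U+E+B)"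
    using lc3[OF sm S0] by (simp_all add: add.assoc)
qed

lemma final_core:
  fixes D N U E B K a k1 k2 k3 m mu b c Ef :: real
  assumes nn: "N\<ge>0" "U\<ge>0" "E\<ge>0" "B\<ge>0" "K\<ge>0" and a: "a>0" "a*(1+K)=1"
  and D: "D \<le> -(3/4)*(k1*m*N) - (mu*(K*U)) - (1/2)*(b*k2*(K*a^2*E)) - (3/4)*(k3*(K^2*a^3*B))"
  and c: "c \<le> mu" "c \<le> 3/4*k1*m" "c \<le> b*k2/2" "c \<le> 3/4*k3" "0 < c"
  and Ef: "Ef \<le> 2*(N+U+E+B)"
  shows "D + c*N + c*K*U + c*(K*a^2)*E + c*(K^2*a^3)*B \<le> 0"
    and "D + (c/2)*(K^2*a^3)*Ef \<le> 0"
proof -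
  have t1: "c*N \<le> (3/4)*(k1*m*N)" using mult_right_mono[OF c(2) nn(1)] by (simp add: algebra_simps)
  have t2: "c*K*U \<le> (mu*(K*U))" using mult_right_mono[OF c(1), of "K*U"] nn by (simp add: algebra_simps)
  have t3: "c*(K*a^2)*E \<le> (1/2)*(b*k2*(K*a^2*E))" using mult_right_mono[OF c(3), of "K*a^2*E"] nn a by (simp add: algebra_simps)
  have t4: "c*(K^2*a^3)*B \<le> (3/4)*(k3*(K^2*a^3*B))" using mult_right_mono[OF c(4), of "K^2*a^3*B"] nn a by (simp add: algebra_simps)
  show g1: "D + c*N + c*K*U + c*(K*a^2)*E + c*(K^2*a^3)*B \<le> 0" using D t1 t2 t3 t4 by linarith
  have Ka: "K*a \<le> 1" using a nn by (simp add: algebra_simps)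
  have a1: "a \<le> 1" using a nn by (metis add_increasing2 less_eq_real_def mult.commute mult_le_cancel_left1 nle_le)
  have Ka0: "0 \<le> K*a" using a nn by simp
  have F0: "0 \<le> K^2*a^3" using a nn by simp
  have Fa: "K^2*a^3 \<le> K*a^2"
  proof -
    have "(K*a)*(K*a^2) \<le> 1*(K*a^2)" using Ka nn a by (intro mult_right_mono) auto
    thus ?thesis by (simp add: power2_eq_square power3_eq_cube algebra_simps)
  qed
  have Fb: "K*a^2 \<le> 1"
  proof -
    have "(K*a)*a \<le> 1*1" using Ka a1 Ka0 a by (intro mult_mono) auto
    thus ?thesis by (simp add: power2_eq_square algebra_simps)
  qed
  have Fc: "K*a^2 \<le> K" using a1 a nn by (simp add: mult_left_le power_le_one)
  have F1: "K^2*a^3 \<le> 1" using Fa Fb by linarith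
  have u1: "(K^2*a^3)*N \<le> N" using mult_right_mono[OF F1 nn(1)] by simp
  have u2: "(K^2*a^3)*U \<le> K*U" using Fa Fc nn by (intro mult_right_mono) auto
  have u3: "(K^2*a^3)*E \<le> (K*a^2)*E" using Fa nn by (intro mult_right_mono) auto
  have "(c/2)*(K^2*a^3)*Ef \<le> (c/2)*(K^2*a^3)*(2*(N+U+E+B))" using Ef c F0 by (intro mult_left_mono) auto
  also have "\<dots> = c*((K^2*a^3)*N) + c*((K^2*a^3)*U) + c*((K^2*a^3)*E) + c*(K^2*a^3)*B" by (simp add: algebra_simps)
  also have "\<dots> \<le> c*N + c*(K*U) + c*((K*a^2)*E) + c*(K^2*a^3)*B"
    using u1 u2 u3 c(5) F0 by (intro add_mono mult_left_mono) auto
  finally show "D + (c/2)*(K^2*a^3)*Ef \<le> 0" using g1 by (simp add: algebra_simps)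
qed


lemmas cx = inner_vec_def sum_3 inner_complex_def kdot_def kcross_def kscale_def
  vector_smult_component vector_add_component vector_minus_component vector_uminus_component

definition nd :: "real \<Rightarrow> real^3 \<Rightarrow> complex^3 \<Rightarrow> complex" where
  "nd \<gamma> k u = - \<i> * complex_of_real \<gamma> * kdot k u"
definition ud :: "real \<Rightarrow> real \<Rightarrow> real \<Rightarrow> real^3 \<Rightarrow> complex \<Rightarrow> complex^3 \<Rightarrow> complex^3 \<Rightarrow> complex^3" where
  "ud \<gamma> \<beta> \<mu> k n u E = - ((\<i> * complex_of_real \<gamma>) *s kscale k n) - complex_of_real \<beta> *s E
           - complex_of_real (\<mu> * (norm k)\<^sup>2) *s u"
definition Ed :: "real \<Rightarrow> real^3 \<Rightarrow> complex^3 \<Rightarrow> complex^3 \<Rightarrow> complex^3" where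
  "Ed \<beta> k u B = \<i> *s kcross k B + complex_of_real \<beta> *s u"
definition Bd :: "real^3 \<Rightarrow> complex^3 \<Rightarrow> complex^3" where
  "Bd k E = - (\<i> *s kcross k E)"

lemma id_energy: "inner (nd \<gamma> k u) n + inner n (nd \<gamma> k u) + inner (ud \<gamma> \<beta> \<mu> k n u E) u + inner u (ud \<gamma> \<beta> \<mu> k n u E)
   + inner (Ed \<beta> k u B) E + inner E (Ed \<beta> k u B) + inner (Bd k E) B + inner B (Bd k E) = -2*\<mu>*(norm k)^2*inner u u"
  unfolding nd_def ud_def Ed_def Bd_def
  apply (simp only: power2_norm_eq_inner) by (simp add: cx algebra_simps)

lemma id_X1: "inner (kscale k (\<i>*nd \<gamma> k u)) u + inner (kscale k (\<i>*n)) (ud \<gamma> \<beta> \<mu> k n u E)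
  = \<gamma>*(cmod (kdot k u))^2 - \<gamma>*(norm k)^2*inner n n - \<mu>*(norm k)^2*inner (kscale k (\<i>*n)) u
    - \<beta>*inner (kscale k (\<i>*n)) E"
  unfolding nd_def ud_def
  apply (simp only: power2_norm_eq_inner) by (simp add: cx algebra_simps)

lemma id_G1: "inner (kscale k (\<i>*n)) E = Re (cnj n * (-(\<i> * kdot k E)))"
  by (simp add: cx algebra_simps)

lemma id_X2: "inner (ud \<gamma> \<beta> \<mu> k n u E) E + inner u (Ed \<beta> k u B)
  = -\<beta>*inner E E - \<gamma>*inner (kscale k (\<i>*n)) E + \<beta>*inner u u - \<mu>*(norm k)^2*inner u E
    + inner u (\<i> *s kcross k B)"
  unfolding ud_def Ed_def
  apply (simp only: power2_norm_eq_inner) by (simp add: cx algebra_simps)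

lemma id_X3: "inner (Ed \<beta> k u B) (\<i> *s kcross k B) + inner E (\<i> *s kcross k (Bd k E))
  = (norm (kcross k B))^2 + \<beta>*inner u (\<i> *s kcross k B) + (cmod (kdot k E))^2 - (norm k)^2*inner E E"
  unfolding Ed_def Bd_def
  apply (simp only: power2_norm_eq_inner) by (simp add: cx algebra_simps)

lemma lagrange: "(norm (kcross k B))^2 + (cmod (kdot k B))^2 = (norm k)^2 * inner B B"
  apply (simp only: power2_norm_eq_inner) by (simp add: cx algebra_simps)

lemma norm_ks: "inner (kscale k (\<i>*n)) (kscale k (\<i>*n)) = (norm k)^2 * inner n n"
  apply (simp only: power2_norm_eq_inner) by (simp add: cx algebra_simps)

lemma norm_ikc: "inner (\<i> *s v) (\<i> *s v) = inner v (v::complex^3)"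
  by (simp add: cx algebra_simps)

lemma cs2: "(inner x y)^2 \<le> inner x x * inner (y::'a::real_inner) y"
  by (rule Cauchy_Schwarz_ineq)

lemma bnd_X1: "(inner (kscale k (\<i>*n)) u)^2 \<le> (norm k)^2 * inner n n * inner u u"
  using cs2[of "kscale k (\<i>*n)" u] by (simp add: norm_ks)

lemma kc_le: "inner (\<i> *s kcross k B) (\<i> *s kcross k B) \<le> (norm k)^2 * inner B B"
proof -
  have "inner (\<i> *s kcross k B) (\<i> *s kcross k B) = (norm (kcross k B))^2" by (simp add: norm_ikc power2_norm_eq_inner)
  moreover have "0 \<le> (cmod (kdot k B))^2" by simp
  ultimately show ?thesis using lagrange[of k B] by linarith
qed

lemma bnd_Y: "(inner u (\<i> *s kcross k B))^2 \<le> (norm k)^2 * inner u u * inner B B"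
proof -
  have "(inner u (\<i> *s kcross k B))^2 \<le> inner u u * inner (\<i> *s kcross k B) (\<i> *s kcross k B)" by (rule cs2)
  also have "\<dots> \<le> inner u u * ((norm k)^2 * inner B B)" by (rule mult_left_mono[OF kc_le]) simp
  finally show ?thesis by (simp add: algebra_simps)
qed

lemma bnd_X3: "(inner E (\<i> *s kcross k B))^2 \<le> (norm k)^2 * inner E E * inner B B"
  using bnd_Y[of E k B] .

lemma bnd_P: "(cmod (kdot k u))^2 \<le> (norm k)^2 * inner u u"
  using lagrange[of k u] by (metis le_add_same_cancel2 zero_le_power2)

lemma kc_zero: "kdot k B = 0 \<Longrightarrow> (norm (kcross k B))^2 = (norm k)^2 * inner B B"
  using lagrange[of k B] by simp

lemma G1_con: "\<i> * kdot k E = - complex_of_real r * n \<Longrightarrow> inner (kscale k (\<i>*n)) E = r * inner n n"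
  by (simp add: id_G1 inner_complex_def algebra_simps)



lemma vd_inner:
  assumes "(f has_vector_derivative f') (at x within S)" "(g has_vector_derivative g') (at x within S)"
  shows "((\<lambda>s. inner (f s) (g s)) has_real_derivative (inner f' (g x) + inner (f x) g')) (at x within S)"
proof -
  have "((\<lambda>s. inner (f s) (g s)) has_derivative (\<lambda>h. inner (f x) (h *\<^sub>R g') + inner (h *\<^sub>R f') (g x))) (at x within S)"
    using has_derivative_inner assms unfolding has_vector_derivative_def by blast
  thus ?thesis unfolding has_field_derivative_def
    by (rule has_derivative_eq_rhs) (simp add: fun_eq_iff algebra_simps)
qed

lemma vd_lin:
  assumes "bounded_linear L" "(f has_vector_derivative f') F"
  shows "((\<lambda>s. L (f s)) has_vector_derivative L f') F"
  using bounded_linear.has_derivative[OF assms(1) assms(2)[unfolded has_vector_derivative_def]]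
  unfolding has_vector_derivative_def by (simp add: linear_scale[OF bounded_linear.linear[OF assms(1)]])

lemma bl_ks: "bounded_linear (\<lambda>z. kscale k (\<i> * z))"
proof -
  have "linear (\<lambda>z. kscale k (\<i> * z))"
    apply (rule linearI)
     apply (simp_all add: kscale_def vec_eq_iff vector_scaleR_component del: scaleR_conv_of_real)
    apply (simp_all add: scaleR_conv_of_real algebra_simps)
    done
  thus ?thesis using linear_conv_bounded_linear by blast
qed

lemma bl_kc: "bounded_linear (\<lambda>v. \<i> *s kcross k v)"
proof -
  have "linear (\<lambda>v. \<i> *s kcross k v)"
    apply (rule linearI)
     apply (simp_all add: kcross_def vec_eq_iff vector_scaleR_component forall_3 del: scaleR_conv_of_real)
    apply (simp_all add: scaleR_conv_of_real algebra_simps)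
    done
  thus ?thesis using linear_conv_bounded_linear by blast
qed

lemma vd_ks: "(f has_vector_derivative f') F \<Longrightarrow> ((\<lambda>s. kscale k (\<i> * f s)) has_vector_derivative kscale k (\<i>*f')) F"
  using vd_lin[OF bl_ks] .

lemma vd_kc: "(f has_vector_derivative f') F \<Longrightarrow> ((\<lambda>s. \<i> *s kcross k (f s)) has_vector_derivative \<i> *s kcross k f') F"
  using vd_lin[OF bl_kc] .

definition wa :: "real^3 \<Rightarrow> real" where "wa k = 1/(1+(norm k)^2)"

definition Ef :: "real \<Rightarrow> real \<Rightarrow> real \<Rightarrow> real^3 \<Rightarrow> complex \<Rightarrow> complex^3 \<Rightarrow> complex^3 \<Rightarrow> complex^3 \<Rightarrow> real" where
  "Ef k1 k2 k3 k n u E B = inner n n + inner u u + inner E E + inner B B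
     + (k1 * wa k) * inner (kscale k (\<i>*n)) u + (k2*(norm k)^2*(wa k)^2) * inner u E
     - (k3*(norm k)^2*(wa k)^3) * inner E (\<i> *s kcross k B)"

lemma deriv_Ef:
  assumes hn: "(n has_vector_derivative n') (at t within S)"
    and hu: "(u has_vector_derivative u') (at t within S)"
    and hE: "(E has_vector_derivative E') (at t within S)"
    and hB: "(B has_vector_derivative B') (at t within S)"
  shows "((\<lambda>s. Ef k1 k2 k3 k (n s) (u s) (E s) (B s)) has_real_derivative
   ((inner n' (n t) + inner (n t) n') + (inner u' (u t) + inner (u t) u') + (inner E' (E t) + inner (E t) E')
    + (inner B' (B t) + inner (B t) B')
    + (k1*wa k)*(inner (kscale k (\<i>*n')) (u t) + inner (kscale k (\<i>*n t)) u')
    + (k2*(norm k)^2*(wa k)^2)*(inner u' (E t) + inner (u t) E')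
    - (k3*(norm k)^2*(wa k)^3)*(inner E' (\<i> *s kcross k (B t)) + inner (E t) (\<i> *s kcross k B')))) (at t within S)"
  unfolding Ef_def
  by (intro DERIV_add DERIV_diff DERIV_cmult vd_inner vd_ks vd_kc assms)



lemma pointwise:
  fixes \<gamma> \<beta> \<mu> k1 k2 k3 m c :: real and k :: "real^3"
    and n :: "real \<Rightarrow> complex" and u E B :: "real \<Rightarrow> complex^3"
  assumes pos: "\<gamma>>0" "\<beta>>0" "\<mu>>0" "m>0" and mq: "m\<le>\<gamma>" "m\<le>\<beta>^2/\<gamma>"
  and kp: "k1>0" "k2>0" "k3>0" "k1\<le>1/2" "k2\<le>1/2" "k3\<le>1/2"
  and c3: "k3 \<le> \<beta>*k2/4" and c1: "k1*\<gamma> \<le> \<mu>/5" "k1*\<mu>^2 \<le> m*\<mu>/5"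
  and c2: "\<beta>*k2 \<le> \<mu>/5" "k2*\<mu>^2 \<le> \<beta>*\<mu>/5" and c4: "(k2+k3*\<beta>)^2 \<le> k3*\<mu>/5"
  and cc: "c \<le> \<mu>" "c \<le> 3/4*k1*m" "c \<le> \<beta>*k2/2" "c \<le> 3/4*k3" "0 < c"
  and hn: "(n has_vector_derivative nd \<gamma> k (u t)) (at t within S)"
  and hu: "(u has_vector_derivative ud \<gamma> \<beta> \<mu> k (n t) (u t) (E t)) (at t within S)"
  and hE: "(E has_vector_derivative Ed \<beta> k (u t) (B t)) (at t within S)"
  and hB: "(B has_vector_derivative Bd k (E t)) (at t within S)"
  and con1: "\<i> * kdot k (E t) = - complex_of_real (\<beta>/\<gamma>) * n t" and con2: "kdot k (B t) = 0"
  shows "(1/2) * ((cmod (n t))\<^sup>2 + (norm (u t))\<^sup>2 + (norm (E t))\<^sup>2 + (norm (B t))\<^sup>2)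
                 \<le> Ef k1 k2 k3 k (n t) (u t) (E t) (B t) \<and>
               Ef k1 k2 k3 k (n t) (u t) (E t) (B t)
                 \<le> 2 * ((cmod (n t))\<^sup>2 + (norm (u t))\<^sup>2 + (norm (E t))\<^sup>2 + (norm (B t))\<^sup>2) \<and>
               (\<exists>D. ((\<lambda>s. Ef k1 k2 k3 k (n s) (u s) (E s) (B s)) has_real_derivative D)
                        (at t within S) \<and>
                    D + c * (cmod (n t))\<^sup>2 + c * (norm k)\<^sup>2 * (norm (u t))\<^sup>2
                      + c * ((norm k)\<^sup>2 / (1 + (norm k)\<^sup>2)\<^sup>2) * (norm (E t))\<^sup>2
                      + c * ((norm k)^4 / (1 + (norm k)\<^sup>2)^3) * (norm (B t))\<^sup>2 \<le> 0 \<and>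
                    D + (c/2) * ((norm k)^4 / (1 + (norm k)\<^sup>2)^3)
                          * Ef k1 k2 k3 k (n t) (u t) (E t) (B t) \<le> 0)"
proof -
  define K where "K = (norm k)^2"
  define a where "a = wa k"
  define N where "N = inner (n t) (n t)"
  define U where "U = inner (u t) (u t)"
  define EE where "EE = inner (E t) (E t)"
  define BB where "BB = inner (B t) (B t)"
  define X1 where "X1 = inner (kscale k (\<i>*n t)) (u t)"
  define X2 where "X2 = inner (u t) (E t)"
  define X3 where "X3 = inner (E t) (\<i> *s kcross k (B t))"
  define Y where "Y = inner (u t) (\<i> *s kcross k (B t))"
  define P where "P = (cmod (kdot k (u t)))^2"
  define R where "R = (cmod (kdot k (E t)))^2"
  have nn: "N\<ge>0" "U\<ge>0" "EE\<ge>0" "BB\<ge>0" "K\<ge>0" by (simp_all add: N_def U_def EE_def BB_def K_def)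
  have w0: "0 < 1 + (norm k)^2" by (simp add: add_pos_nonneg)
  have a: "a>0" "a*(1+K)=1" unfolding a_def wa_def K_def using w0 by simp_all
  have Pb: "0\<le>P" "P\<le>K*U" using bnd_P[of k "u t"] by (simp_all add: P_def K_def U_def)
  have R0: "0\<le>R" by (simp add: R_def)
  have bX1: "X1^2 \<le> K*N*U" using bnd_X1[of k "n t" "u t"] by (simp add: X1_def K_def N_def U_def)
  have bX2: "X2^2 \<le> U*EE" using cs2[of "u t" "E t"] by (simp add: X2_def U_def EE_def)
  have bX3: "X3^2 \<le> K*EE*BB" using bnd_X3[of "E t" k "B t"] by (simp add: X3_def K_def EE_def BB_def)
  have bY: "Y^2 \<le> K*U*BB" using bnd_Y[of "u t" k "B t"] by (simp add: Y_def K_def U_def BB_def)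
  have Efv: "Ef k1 k2 k3 k (n t) (u t) (E t) (B t) = N+U+EE+BB + k1*a*X1 + k2*K*a^2*X2 - k3*K*a^3*X3"
    by (simp add: Ef_def N_def U_def EE_def BB_def X1_def X2_def X3_def K_def a_def)
  have S: "(cmod (n t))\<^sup>2 + (norm (u t))\<^sup>2 + (norm (E t))\<^sup>2 + (norm (B t))\<^sup>2 = N+U+EE+BB"
    by (simp add: N_def U_def EE_def BB_def power2_norm_eq_inner)
  note eqv = equiv_core[OF nn a bX1 bX2 bX3 kp(1) kp(4) kp(2) kp(5) kp(3) kp(6)]
  define D where "D = ((inner (nd \<gamma> k (u t)) (n t) + inner (n t) (nd \<gamma> k (u t)))
    + (inner (ud \<gamma> \<beta> \<mu> k (n t) (u t) (E t)) (u t) + inner (u t) (ud \<gamma> \<beta> \<mu> k (n t) (u t) (E t)))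
    + (inner (Ed \<beta> k (u t) (B t)) (E t) + inner (E t) (Ed \<beta> k (u t) (B t)))
    + (inner (Bd k (E t)) (B t) + inner (B t) (Bd k (E t)))
    + (k1*wa k)*(inner (kscale k (\<i>*nd \<gamma> k (u t))) (u t) + inner (kscale k (\<i>*n t)) (ud \<gamma> \<beta> \<mu> k (n t) (u t) (E t)))
    + (k2*(norm k)^2*(wa k)^2)*(inner (ud \<gamma> \<beta> \<mu> k (n t) (u t) (E t)) (E t) + inner (u t) (Ed \<beta> k (u t) (B t)))
    - (k3*(norm k)^2*(wa k)^3)*(inner (Ed \<beta> k (u t) (B t)) (\<i> *s kcross k (B t)) + inner (E t) (\<i> *s kcross k (Bd k (E t)))))"
  have der: "((\<lambda>s. Ef k1 k2 k3 k (n s) (u s) (E s) (B s)) has_real_derivative D) (at t within S)"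
    unfolding D_def by (rule deriv_Ef[OF hn hu hE hB])
  have G: "inner (kscale k (\<i>*n t)) (E t) = (\<beta>/\<gamma>) * N" using G1_con[OF con1] by (simp add: N_def)
  have i0: "inner (nd \<gamma> k (u t)) (n t) + inner (n t) (nd \<gamma> k (u t))
    + (inner (ud \<gamma> \<beta> \<mu> k (n t) (u t) (E t)) (u t) + inner (u t) (ud \<gamma> \<beta> \<mu> k (n t) (u t) (E t)))
    + (inner (Ed \<beta> k (u t) (B t)) (E t) + inner (E t) (Ed \<beta> k (u t) (B t)))
    + (inner (Bd k (E t)) (B t) + inner (B t) (Bd k (E t))) = -2*\<mu>*K*U"
    using id_energy[of \<gamma> k "u t" "n t" \<beta> \<mu> "E t" "B t"] by (simp add: K_def U_def add.assoc)
  have i1: "inner (kscale k (\<i>*nd \<gamma> k (u t))) (u t) + inner (kscale k (\<i>*n t)) (ud \<gamma> \<beta> \<mu> k (n t) (u t) (E t))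
     = \<gamma>*P - \<gamma>*K*N - (\<beta>^2/\<gamma>)*N - \<mu>*K*X1"
    using id_X1[of k \<gamma> "u t" "n t" \<beta> \<mu> "E t"] G pos by (simp add: K_def N_def P_def X1_def power2_eq_square)
  have i2: "inner (ud \<gamma> \<beta> \<mu> k (n t) (u t) (E t)) (E t) + inner (u t) (Ed \<beta> k (u t) (B t))
     = -\<beta>*EE - \<beta>*N + \<beta>*U - \<mu>*K*X2 + Y"
    using id_X2[of \<gamma> \<beta> \<mu> k "n t" "u t" "E t" "B t"] G pos by (simp add: K_def N_def U_def EE_def X2_def Y_def)
  have i3: "inner (Ed \<beta> k (u t) (B t)) (\<i> *s kcross k (B t)) + inner (E t) (\<i> *s kcross k (Bd k (E t)))
     = K*BB + \<beta>*Y + R - K*EE"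
    using id_X3[of \<beta> k "u t" "B t" "E t"] kc_zero[OF con2] by (simp add: K_def BB_def Y_def R_def EE_def)
  have Dv: "D = -2*\<mu>*K*U + k1*a*(\<gamma>*P - \<gamma>*K*N - (\<beta>^2/\<gamma>)*N - \<mu>*K*X1)
      + k2*K*a^2*(-\<beta>*EE - \<beta>*N + \<beta>*U - \<mu>*K*X2 + Y) - k3*K*a^3*(K*BB + \<beta>*Y + R - K*EE)"
    unfolding D_def i1 i2 i3 using i0 by (simp add: a_def K_def)
  have Db: "D \<le> -(3/4)*(k1*m*N) - (\<mu>*(K*U)) - (1/2)*(\<beta>*k2*(K*a^2*EE)) - (3/4)*(k3*(K^2*a^3*BB))"
    unfolding Dv by (rule core[OF nn a Pb R0 bX1 bX2 bY pos mq kp(1-3) c3 c1 c2 c4])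
  note fc = final_core[OF nn a Db cc eqv(2)]
  have w1: "(norm k)\<^sup>2 / (1 + (norm k)\<^sup>2)\<^sup>2 = K*a^2" by (simp add: K_def a_def wa_def power_divide)
  have w2: "(norm k)^4 / (1 + (norm k)\<^sup>2)^3 = K^2*a^3"
    by (simp add: K_def a_def wa_def power_divide flip: power_mult)
  show ?thesis
  proof (intro conjI exI)
    show "(1/2) * ((cmod (n t))\<^sup>2 + (norm (u t))\<^sup>2 + (norm (E t))\<^sup>2 + (norm (B t))\<^sup>2) \<le> Ef k1 k2 k3 k (n t) (u t) (E t) (B t)"
      unfolding S Efv by (rule eqv(1))
    show "Ef k1 k2 k3 k (n t) (u t) (E t) (B t) \<le> 2 * ((cmod (n t))\<^sup>2 + (norm (u t))\<^sup>2 + (norm (E t))\<^sup>2 + (norm (B t))\<^sup>2)"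
      unfolding S Efv by (rule eqv(2))
    show "((\<lambda>s. Ef k1 k2 k3 k (n s) (u s) (E s) (B s)) has_real_derivative D) (at t within S)" by (rule der)
    show "D + c * (cmod (n t))\<^sup>2 + c * (norm k)\<^sup>2 * (norm (u t))\<^sup>2
                      + c * ((norm k)\<^sup>2 / (1 + (norm k)\<^sup>2)\<^sup>2) * (norm (E t))\<^sup>2
                      + c * ((norm k)^4 / (1 + (norm k)\<^sup>2)^3) * (norm (B t))\<^sup>2 \<le> 0"
      unfolding w1 w2 using fc(1) by (simp add: N_def U_def EE_def BB_def K_def power2_norm_eq_inner)
    show "D + (c/2) * ((norm k)^4 / (1 + (norm k)\<^sup>2)^3) * Ef k1 k2 k3 k (n t) (u t) (E t) (B t) \<le> 0"
      unfolding w2 Efv using fc(2) by simp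
  qed
qed



theorem theorem2p1:
  fixes \<gamma> \<beta> \<mu> :: real
  assumes "\<gamma> > 0" and "\<beta> > 0" and "\<mu> > 0"
  shows "\<exists>(\<E> :: real^3 \<Rightarrow> complex \<Rightarrow> complex^3 \<Rightarrow> complex^3 \<Rightarrow> complex^3 \<Rightarrow> real)
            (c::real) (c'::real) (C1::real) (C2::real).
           c > 0 \<and> c' > 0 \<and> C1 > 0 \<and> C2 > 0 \<and>
           (\<forall>nh uh Eh Bh. fourier_system \<gamma> \<beta> \<mu> nh uh Eh Bh \<longrightarrow>
             (\<forall>t\<ge>0. \<forall>k.
               C1 * ((cmod (nh t k))\<^sup>2 + (norm (uh t k))\<^sup>2 + (norm (Eh t k))\<^sup>2 + (norm (Bh t k))\<^sup>2)
                 \<le> \<E> k (nh t k) (uh t k) (Eh t k) (Bh t k) \<and>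
               \<E> k (nh t k) (uh t k) (Eh t k) (Bh t k)
                 \<le> C2 * ((cmod (nh t k))\<^sup>2 + (norm (uh t k))\<^sup>2 + (norm (Eh t k))\<^sup>2 + (norm (Bh t k))\<^sup>2) \<and>
               (\<exists>D. ((\<lambda>s. \<E> k (nh s k) (uh s k) (Eh s k) (Bh s k)) has_real_derivative D)
                        (at t within {0..}) \<and>
                    D + c * (cmod (nh t k))\<^sup>2 + c * (norm k)\<^sup>2 * (norm (uh t k))\<^sup>2
                      + c * ((norm k)\<^sup>2 / (1 + (norm k)\<^sup>2)\<^sup>2) * (norm (Eh t k))\<^sup>2
                      + c * ((norm k)^4 / (1 + (norm k)\<^sup>2)^3) * (norm (Bh t k))\<^sup>2 \<le> 0 \<and>
                    D + c' * ((norm k)^4 / (1 + (norm k)\<^sup>2)^3)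
                          * \<E> k (nh t k) (uh t k) (Eh t k) (Bh t k) \<le> 0)))"
proof -
  have pos: "\<gamma>>0" "\<beta>>0" "\<mu>>0" using assms by auto
  define m where "m = min \<gamma> (\<beta>^2/\<gamma>)"
  define th where "th = min (\<beta>/4) 1"
  define k1 where "k1 = min (1/2) (min (\<mu>/(5*\<gamma>)) (m/(5*\<mu>)))"
  define k2 where "k2 = min (1/2) (min (\<mu>/(5*\<beta>)) (min (\<beta>/(5*\<mu>)) (\<mu>*th/(5*(1+th*\<beta>)^2))))"
  define k3 where "k3 = th*k2"
  define c where "c = min (min \<mu> (3/4*k1*m)) (min (\<beta>*k2/2) (3/4*k3))"
  have m0: "m>0" "m\<le>\<gamma>" "m\<le>\<beta>^2/\<gamma>" using pos by (auto simp: m_def)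
  have th: "th>0" "th\<le>\<beta>/4" "th\<le>1" using pos by (auto simp: th_def)
  have thb: "0 < 1+th*\<beta>" using th pos by (simp add: add_pos_pos)
  have k1p: "k1>0" "k1\<le>1/2" "k1 \<le> \<mu>/(5*\<gamma>)" "k1 \<le> m/(5*\<mu>)" using pos m0 by (auto simp: k1_def)
  have k2p: "k2>0" "k2\<le>1/2" "k2 \<le> \<mu>/(5*\<beta>)" "k2 \<le> \<beta>/(5*\<mu>)" "k2 \<le> \<mu>*th/(5*(1+th*\<beta>)^2)"
    using pos th thb by (auto simp: k2_def)
  have "th*k2 \<le> 1*k2" using th k2p by (intro mult_right_mono) auto
  hence k3le: "k3 \<le> k2" by (simp add: k3_def)
  have k3p: "k3>0" "k3\<le>1/2" using k2p th k3le by (simp add: k3_def, linarith)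
  have c3: "k3 \<le> \<beta>*k2/4" using mult_right_mono[OF th(2), of k2] k2p by (simp add: k3_def)
  have c1: "k1*\<gamma> \<le> \<mu>/5" "k1*\<mu>^2 \<le> m*\<mu>/5"
    using k1p(3,4) pos by (simp_all add: field_simps power2_eq_square)
  have c2: "\<beta>*k2 \<le> \<mu>/5" "k2*\<mu>^2 \<le> \<beta>*\<mu>/5"
    using k2p(3,4) pos by (simp_all add: field_simps power2_eq_square)
  have c4: "(k2+k3*\<beta>)^2 \<le> k3*\<mu>/5"
  proof -
    have "k2*(1+th*\<beta>)^2 \<le> \<mu>*th/5" using k2p(5) thb by (simp add: field_simps)
    hence "k2*(k2*(1+th*\<beta>)^2) \<le> k2*(\<mu>*th/5)" using k2p(1) by (simp add: mult_left_mono)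
    thus ?thesis by (simp add: k3_def power2_eq_square algebra_simps)
  qed
  have cc: "c \<le> \<mu>" "c \<le> 3/4*k1*m" "c \<le> \<beta>*k2/2" "c \<le> 3/4*k3" "0 < c"
    using pos k1p k2p k3p m0 by (auto simp: c_def)
  show ?thesis
  proof (rule exI[of _ "Ef k1 k2 k3"], rule exI[of _ c], rule exI[of _ "c/2"], rule exI[of _ "1/2"],
         rule exI[of _ 2], intro conjI)
    show "c > 0" "c/2 > 0" "(1/2::real) > 0" "(2::real) > 0" using cc by auto
    show "\<forall>nh uh Eh Bh. fourier_system \<gamma> \<beta> \<mu> nh uh Eh Bh \<longrightarrow>
             (\<forall>t\<ge>0. \<forall>k.
               1/2 * ((cmod (nh t k))\<^sup>2 + (norm (uh t k))\<^sup>2 + (norm (Eh t k))\<^sup>2 + (norm (Bh t k))\<^sup>2)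
                 \<le> Ef k1 k2 k3 k (nh t k) (uh t k) (Eh t k) (Bh t k) \<and>
               Ef k1 k2 k3 k (nh t k) (uh t k) (Eh t k) (Bh t k)
                 \<le> 2 * ((cmod (nh t k))\<^sup>2 + (norm (uh t k))\<^sup>2 + (norm (Eh t k))\<^sup>2 + (norm (Bh t k))\<^sup>2) \<and>
               (\<exists>D. ((\<lambda>s. Ef k1 k2 k3 k (nh s k) (uh s k) (Eh s k) (Bh s k)) has_real_derivative D)
                        (at t within {0..}) \<and>
                    D + c * (cmod (nh t k))\<^sup>2 + c * (norm k)\<^sup>2 * (norm (uh t k))\<^sup>2
                      + c * ((norm k)\<^sup>2 / (1 + (norm k)\<^sup>2)\<^sup>2) * (norm (Eh t k))\<^sup>2
                      + c * ((norm k)^4 / (1 + (norm k)\<^sup>2)^3) * (norm (Bh t k))\<^sup>2 \<le> 0 \<and>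
                    D + c/2 * ((norm k)^4 / (1 + (norm k)\<^sup>2)^3)
                          * Ef k1 k2 k3 k (nh t k) (uh t k) (Eh t k) (Bh t k) \<le> 0))"
    proof (intro allI impI)
      fix nh uh Eh Bh and t :: real and k :: "real^3"
      assume fs: "fourier_system \<gamma> \<beta> \<mu> nh uh Eh Bh" and t: "t \<ge> 0"
      have H: "((\<lambda>s. nh s k) has_vector_derivative
          (- \<i> * complex_of_real \<gamma> * kdot k (uh t k))) (at t within {0..}) \<and>
      ((\<lambda>s. uh s k) has_vector_derivative
          (- ((\<i> * complex_of_real \<gamma>) *s kscale k (nh t k))
           - complex_of_real \<beta> *s Eh t k
           - complex_of_real (\<mu> * (norm k)\<^sup>2) *s uh t k)) (at t within {0..}) \<and>
      ((\<lambda>s. Eh s k) has_vector_derivative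
          (\<i> *s kcross k (Bh t k) + complex_of_real \<beta> *s uh t k)) (at t within {0..}) \<and>
      ((\<lambda>s. Bh s k) has_vector_derivative
          (- (\<i> *s kcross k (Eh t k)))) (at t within {0..}) \<and>
      \<i> * kdot k (Eh t k) = - complex_of_real (\<beta> / \<gamma>) * nh t k \<and>
      kdot k (Bh t k) = 0" using fs t unfolding fourier_system_def by blast
      have hn: "((\<lambda>s. nh s k) has_vector_derivative nd \<gamma> k (uh t k)) (at t within {0..})"
        using H by (simp add: nd_def)
      have hu: "((\<lambda>s. uh s k) has_vector_derivative ud \<gamma> \<beta> \<mu> k (nh t k) (uh t k) (Eh t k)) (at t within {0..})"
        using H by (simp add: ud_def)
      have hE: "((\<lambda>s. Eh s k) has_vector_derivative Ed \<beta> k (uh t k) (Bh t k)) (at t within {0..})"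
        using H by (simp add: Ed_def)
      have hB: "((\<lambda>s. Bh s k) has_vector_derivative Bd k (Eh t k)) (at t within {0..})"
        using H by (simp add: Bd_def)
      show "1/2 * ((cmod (nh t k))\<^sup>2 + (norm (uh t k))\<^sup>2 + (norm (Eh t k))\<^sup>2 + (norm (Bh t k))\<^sup>2)
                 \<le> Ef k1 k2 k3 k (nh t k) (uh t k) (Eh t k) (Bh t k) \<and>
               Ef k1 k2 k3 k (nh t k) (uh t k) (Eh t k) (Bh t k)
                 \<le> 2 * ((cmod (nh t k))\<^sup>2 + (norm (uh t k))\<^sup>2 + (norm (Eh t k))\<^sup>2 + (norm (Bh t k))\<^sup>2) \<and>
               (\<exists>D. ((\<lambda>s. Ef k1 k2 k3 k (nh s k) (uh s k) (Eh s k) (Bh s k)) has_real_derivative D)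
                        (at t within {0..}) \<and>
                    D + c * (cmod (nh t k))\<^sup>2 + c * (norm k)\<^sup>2 * (norm (uh t k))\<^sup>2
                      + c * ((norm k)\<^sup>2 / (1 + (norm k)\<^sup>2)\<^sup>2) * (norm (Eh t k))\<^sup>2
                      + c * ((norm k)^4 / (1 + (norm k)\<^sup>2)^3) * (norm (Bh t k))\<^sup>2 \<le> 0 \<and>
                    D + c/2 * ((norm k)^4 / (1 + (norm k)\<^sup>2)^3)
                          * Ef k1 k2 k3 k (nh t k) (uh t k) (Eh t k) (Bh t k) \<le> 0)"
        using pointwise[OF pos m0 k1p(1) k2p(1) k3p(1) k1p(2) k2p(2) k3p(2) c3 c1 c2 c4 cc hn hu hE hB]
          H by simp
    qed
  qed
qed
end
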